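(* Let $P^*$ and $\widehat P$ be transition kernels and $\pi_b,\pi$ policies satisfying the standing assumptions, and let $\mathcal G$ be any class of functions $g:\mathbb S\times\mathbb A\to\mathbb R$ with $\sup_{g\in\mathcal G}\|g\|_\infty<\infty$. Define $$\mathcal F:=\Big\{Q_g^{\pi,\widehat P}\;:\;g\in\mathcal G\Big\},$$ i.e. $f\in\mathcal F$ iff $f(s,a)=\mathbb E_{\pi,\widehat P}\big[\sum_{t=0}^\infty (g(s_t,a_t)-\hat\eta^\pi_g)\mid s_0=s,a_0=a\big]$ with $\hat\eta^\pi_g=\lim_{T\to\infty}\mathbb E_{\pi,\widehat P}\big[\frac1{T+1}\sum_{t=0}^T g(s_t,a_t)\big]$ for some $g\in\mathcal G$. Then $$D_{\mathcal G}\big(d_{\pi_b}^{P^*},d_{\pi}^{\widehat P}\big)=\mathcal R_{\mathcal F}(d_{\pi_b}^{P^*},\pi,\widehat P):=\sup_{f\in\mathcal F}\Big|\mathbb E_{(s,a)\sim d_{\pi_b}^{P^*}}[f(s,a)]-\mathbb E_{(s,a)\sim d_{\pi_b}^{P^*},\,s'\sim\widehat P(\cdot\mid s,a),\,a'\sim\pi(\cdot\mid s')}[f(s',a')]\Big|.$$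
   Context: Standing setting: finite state space $\mathbb S$ and finite action space $\mathbb A$. A transition kernel $P$ gives probabilities $P(s'\mid s,a)$; a (time-stationary Markov) policy $\pi$ gives probabilities $\pi(a\mid s)$. Standing assumption: for every kernel $P\in\{P^*,\widehat P\}$ and policy $\pi$ considered, the Markov chain on $\mathbb S\times\mathbb A$ with transitions $(s,a)\mapsto(s',a')$, $s'\sim P(\cdot\mid s,a)$, $a'\sim\pi(\cdot\mid s')$, is irreducible and aperiodic. Its unique stationary distribution is denoted $d_\pi^P(s,a)$ (so $d_\pi^P(s,a)=d_\pi^P(s)\pi(a\mid s)$ and $d^P_\pi(s',a')=\sum_{s,a}\pi(a'\mid s')P(s'\mid s,a)d^P_\pi(s,a)$). $P^*$ is the true dynamics, $\widehat P$ an estimated dynamics, $\pi_b$ the behavior policy. For a bounded "reward" $g:\mathbb S\times\mathbb A\to\mathbb R$, the average reward is $\eta^{\pi,P}_g=\mathbb E_{d_\pi^P}[g]=\lim_{T\to\infty}\mathbb E_{\pi,P}[\frac1{T+1}\sum_{t=0}^T g(s_t,a_t)]$, and the differential value function is $Q_g^{\pi,P}(s,a)=\mathbb E_{\pi,P}\big[\sum_{t=0}^\infty (g(s_t,a_t)-\eta^{\pi,P}_g)\mid s_0=s,a_0=a\big]$ (the series converges under the standing assumption), where $\mathbb E_{\pi,P}$ is over trajectories with $s_{t+1}\sim P(\cdot\mid s_t,a_t)$, $a_{t+1}\sim\pi(\cdot\mid s_{t+1})$. For a function class $\mathcal G$ and distributions $\mu,\nu$ on $\mathbb S\times\mathbb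 A$, the integral probability metric is $D_{\mathcal G}(\mu,\nu):=\sup_{g\in\mathcal G}\big|\mathbb E_{\mu}[g]-\mathbb E_{\nu}[g]\big|$. *)

theory Defs
  imports "HOL-Analysis.Analysis"
begin

text \<open>Finite state type 's, finite action type 'a.
  A kernel P gives P s a s' = P(s' | s,a); a policy pol gives pol s a = pi(a | s).\<close>

definition kernel :: "('s::finite \<Rightarrow> 'a::finite \<Rightarrow> 's \<Rightarrow> real) \<Rightarrow> bool" where
  "kernel P \<longleftrightarrow> (\<forall>s a s'. P s a s' \<ge> 0) \<and> (\<forall>s a. (\<Sum>s'\<in>UNIV. P s a s') = 1)"

definition policy :: "('s::finite \<Rightarrow> 'a::finite \<Rightarrow> real) \<Rightarrow> bool" where
  "policy pol \<longleftrightarrow> (\<forall>s a. pol s a \<ge> 0) \<and> (\<forall>s. (\<Sum>a\<in>UNIV. pol s a) = 1)"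

definition sa_trans ::
  "('s::finite \<Rightarrow> 'a::finite \<Rightarrow> 's \<Rightarrow> real) \<Rightarrow> ('s \<Rightarrow> 'a \<Rightarrow> real)
   \<Rightarrow> ('s \<times> 'a) \<Rightarrow> ('s \<times> 'a) \<Rightarrow> real" where
  "sa_trans P pol x y = P (fst x) (snd x) (fst y) * pol (fst y) (snd y)"

fun mstep :: "('x::finite \<Rightarrow> 'x \<Rightarrow> real) \<Rightarrow> nat \<Rightarrow> 'x \<Rightarrow> 'x \<Rightarrow> real" where
  "mstep M 0 x y = (if x = y then 1 else 0)"
| "mstep M (Suc n) x y = (\<Sum>z\<in>UNIV. mstep M n x z * M z y)"

definition irreducible :: "('x::finite \<Rightarrow> 'x \<Rightarrow> real) \<Rightarrow> bool" where
  "irreducible M \<longleftrightarrow> (\<forall>x y. \<exists>n>0. mstep M n x y > 0)"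

definition aperiodic :: "('x::finite \<Rightarrow> 'x \<Rightarrow> real) \<Rightarrow> bool" where
  "aperiodic M \<longleftrightarrow> (\<forall>x. Gcd {n. n > 0 \<and> mstep M n x x > 0} = (1::nat))"

definition standing :: "('s::finite \<Rightarrow> 'a::finite \<Rightarrow> 's \<Rightarrow> real) \<Rightarrow> ('s \<Rightarrow> 'a \<Rightarrow> real) \<Rightarrow> bool" where
  "standing P pol \<longleftrightarrow> irreducible (sa_trans P pol) \<and> aperiodic (sa_trans P pol)"

text \<open>Stationary distribution d_pi^P on S x A (unique under the standing assumption).\<close>
definition stat_dist ::
  "('s::finite \<Rightarrow> 'a::finite \<Rightarrow> 's \<Rightarrow> real) \<Rightarrow> ('s \<Rightarrow> 'a \<Rightarrow> real) \<Rightarrow> ('s \<times> 'a) \<Rightarrow> real" where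
  "stat_dist P pol = (THE d. (\<forall>x. d x \<ge> 0) \<and> (\<Sum>x\<in>UNIV. d x) = 1 \<and>
      (\<forall>y. d y = (\<Sum>x\<in>UNIV. d x * sa_trans P pol x y)))"

definition expect :: "(('s::finite \<times> 'a::finite) \<Rightarrow> real) \<Rightarrow> ('s \<times> 'a \<Rightarrow> real) \<Rightarrow> real" where
  "expect d g = (\<Sum>x\<in>UNIV. d x * g x)"

definition avg_reward ::
  "('s::finite \<Rightarrow> 'a::finite \<Rightarrow> 's \<Rightarrow> real) \<Rightarrow> ('s \<Rightarrow> 'a \<Rightarrow> real) \<Rightarrow> ('s \<times> 'a \<Rightarrow> real) \<Rightarrow> real" where
  "avg_reward P pol g = expect (stat_dist P pol) g"

definition diff_Q ::
  "('s::finite \<Rightarrow> 'a::finite \<Rightarrow> 's \<Rightarrow> real) \<Rightarrow> ('s \<Rightarrow> 'a \<Rightarrow> real) \<Rightarrow> ('s \<times> 'a \<Rightarrow> real)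
   \<Rightarrow> ('s \<times> 'a) \<Rightarrow> real" where
  "diff_Q P pol g x = (\<Sum>t. (\<Sum>y\<in>UNIV. mstep (sa_trans P pol) t x y * g y) - avg_reward P pol g)"

definition IPM :: "('s::finite \<times> 'a::finite \<Rightarrow> real) set \<Rightarrow> ('s \<times> 'a \<Rightarrow> real) \<Rightarrow> ('s \<times> 'a \<Rightarrow> real) \<Rightarrow> real" where
  "IPM G mu nu = (SUP g\<in>G. \<bar>expect mu g - expect nu g\<bar>)"

definition bellman_R ::
  "('s::finite \<times> 'a::finite \<Rightarrow> real) set \<Rightarrow> ('s \<times> 'a \<Rightarrow> real) \<Rightarrow> ('s \<Rightarrow> 'a \<Rightarrow> real)
   \<Rightarrow> ('s \<Rightarrow> 'a \<Rightarrow> 's \<Rightarrow> real) \<Rightarrow> real" where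
  "bellman_R F mu pol P = (SUP f\<in>F. \<bar>expect mu f -
      (\<Sum>x\<in>UNIV. mu x * (\<Sum>s'\<in>UNIV. P (fst x) (snd x) s' * (\<Sum>a'\<in>UNIV. pol s' a' * f (s', a'))))\<bar>)"

end

theory Submission
  imports Defs
begin

lemma mult_closed:
  assumes add: "\<And>a b. a \<in> S \<Longrightarrow> b \<in> S \<Longrightarrow> a + b \<in> S" and z: "(0::nat) \<in> S"
    and x: "x \<in> S"
  shows "k * x \<in> S"
  by (induction k) (auto simp: z intro: add x)

lemma numsemigroup:
  fixes S :: "nat set"
  assumes add: "\<And>a b. a \<in> S \<Longrightarrow> b \<in> S \<Longrightarrow> a + b \<in> S"
    and g: "Gcd S = 1"
  shows "\<exists>n0. \<forall>n\<ge>n0. n \<in> S"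
proof -
  define S' where "S' = insert 0 S"
  have add': "a + b \<in> S'" if "a \<in> S'" "b \<in> S'" for a b
    using that add by (auto simp: S'_def)
  have z: "0 \<in> S'" by (simp add: S'_def)
  have mul: "k * x \<in> S'" if "x \<in> S'" for k x
    using mult_closed[of S' x k] add' z that by blast
  define T where "T = {k::nat. k > 0 \<and> (\<exists>A\<in>S'. \<exists>B\<in>S'. int k = int A - int B)}"
  obtain s where s: "s \<in> S" "s \<noteq> 0"
  proof -
    have "\<not> S \<subseteq> {0}"
    proof
      assume "S \<subseteq> {0}"
      then have "S = {} \<or> S = {0}" by blast
      then show False using g by auto
    qed
    then show ?thesis using that by blast
  qed
  have "s \<in> T" using s unfolding T_def S'_def by force
  define d where "d = (LEAST k. k \<in> T)"
  have dT: "d \<in> T" unfolding d_def by (rule LeastI) fact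
  have dmin: "\<And>k. k \<in> T \<Longrightarrow> d \<le> k" unfolding d_def by (rule Least_le)
  obtain A B where AB: "A \<in> S'" "B \<in> S'" "int d = int A - int B" "d > 0"
    using dT by (auto simp: T_def)
  have "d dvd x" if "x \<in> S" for x
  proof -
    define q r where "q = x div d" and "r = x mod d"
    have xqr: "x = q * d + r" by (simp add: q_def r_def)
    have rl: "r < d" using AB(4) by (simp add: r_def)
    have "int r = int (x + q * B) - int (q * A)"
      using xqr AB(3) by (simp add: algebra_simps) (metis of_nat_add of_nat_mult
          add_diff_cancel_left' diff_add_cancel mult.commute right_diff_distrib)
    moreover have "x + q * B \<in> S'" "q * A \<in> S'"
    proof -
      have "x \<in> S'" "q * B \<in> S'" using that AB(2) mul by (auto simp: S'_def)
      then show "x + q * B \<in> S'" by (rule add')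
      show "q * A \<in> S'" using AB(1) mul by blast
    qed
    ultimately have "r = 0 \<or> r \<in> T" unfolding T_def mem_Collect_eq by (metis neq0_conv)
    then have "r = 0" using dmin rl by force
    then show ?thesis using xqr by simp
  qed
  then have "d dvd Gcd S" by (rule Gcd_greatest)
  then have d1: "d = 1" using g by simp
  show ?thesis
  proof (cases "B = 0")
    case True
    then have A1: "A = 1" using AB d1 by simp
    show ?thesis
    proof (intro exI[of _ 1] allI impI)
      fix n :: nat assume "n \<ge> 1"
      have "n * A \<in> S'" using mul AB by blast
      then show "n \<in> S" using A1 \<open>n \<ge> 1\<close> by (auto simp: S'_def)
    qed
  next
    case False
    have A1: "A = B + 1" using AB d1 by simp
    show ?thesis
    proof (intro exI[of _ "B * B"] allI impI)
      fix n assume n: "n \<ge> B * B"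
      define q r where "q = n div B" and "r = n mod B"
      have nqr: "n = q * B + r" by (simp add: q_def r_def)
      have rB: "r < B" using False by (simp add: r_def)
      have qB: "q \<ge> B" using n False unfolding q_def
        by (metis div_le_mono nonzero_mult_div_cancel_right)
      have "n = (q - r) * B + r * A" using nqr A1 qB rB
        by (simp add: algebra_simps diff_mult_distrib)
      moreover have "(q - r) * B + r * A \<in> S'" using mul add' AB by blast
      moreover have "n \<noteq> 0" using n False qB rB nqr by auto
      ultimately show "n \<in> S" by (auto simp: S'_def)
    qed
  qed
qed

definition stoch :: "('x::finite \<Rightarrow> 'x \<Rightarrow> real) \<Rightarrow> bool" where
  "stoch M \<longleftrightarrow> (\<forall>x y. M x y \<ge> 0) \<and> (\<forall>x. (\<Sum>y\<in>UNIV. M x y) = 1)"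

definition app :: "('x::finite \<Rightarrow> 'x \<Rightarrow> real) \<Rightarrow> ('x \<Rightarrow> real) \<Rightarrow> 'x \<Rightarrow> real" where
  "app K h x = (\<Sum>y\<in>UNIV. K x y * h y)"

lemma sum_swap3:
  fixes a :: "'z \<Rightarrow> real"
  shows "(\<Sum>w\<in>A. (\<Sum>z\<in>B. a z * b z w) * c w) = (\<Sum>z\<in>B. a z * (\<Sum>w\<in>A. b z w * c w))"
proof -
  have "(\<Sum>w\<in>A. (\<Sum>z\<in>B. a z * b z w) * c w) = (\<Sum>w\<in>A. \<Sum>z\<in>B. a z * (b z w * c w))"
    by (simp add: sum_distrib_right mult.assoc)
  also have "\<dots> = (\<Sum>z\<in>B. \<Sum>w\<in>A. a z * (b z w * c w))" by (rule sum.swap)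
  also have "\<dots> = (\<Sum>z\<in>B. a z * (\<Sum>w\<in>A. b z w * c w))" by (simp add: sum_distrib_left)
  finally show ?thesis .
qed

lemma mstep_nonneg: "stoch M \<Longrightarrow> mstep M n x y \<ge> 0"
  by (induction n arbitrary: y) (auto simp: stoch_def intro!: sum_nonneg)

lemma mstep_sum: "stoch M \<Longrightarrow> (\<Sum>y\<in>UNIV. mstep M n x y) = 1"
proof (induction n)
  case 0 then show ?case by simp
next
  case (Suc n)
  have "(\<Sum>y\<in>UNIV. mstep M (Suc n) x y) = (\<Sum>y\<in>UNIV. (\<Sum>z\<in>UNIV. mstep M n x z * M z y) * 1)"
    by simp
  also have "\<dots> = (\<Sum>z\<in>UNIV. mstep M n x z * (\<Sum>y\<in>UNIV. M z y * 1))"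
    by (rule sum_swap3)
  finally have "(\<Sum>y\<in>UNIV. mstep M (Suc n) x y) = (\<Sum>z\<in>UNIV. mstep M n x z * (\<Sum>y\<in>UNIV. M z y))"
    by simp
  also have "\<dots> = 1" using Suc by (simp add: stoch_def)
  finally show ?case .
qed

lemma mstep_le1: "stoch M \<Longrightarrow> mstep M n x y \<le> 1"
proof -
  assume M: "stoch M"
  have "mstep M n x y \<le> (\<Sum>y'\<in>UNIV. mstep M n x y')"
    by (rule member_le_sum) (auto intro: mstep_nonneg[OF M])
  then show ?thesis using mstep_sum[OF M, of n x] by simp
qed

lemma stoch_mstep: "stoch M \<Longrightarrow> stoch (mstep M n)"
  using mstep_nonneg mstep_sum unfolding stoch_def by blast

lemma mstep_add: "mstep M (m + n) x y = (\<Sum>z\<in>UNIV. mstep M m x z * mstep M n z y)"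
proof (induction n arbitrary: y)
  case 0
  have "(\<Sum>z\<in>UNIV. mstep M m x z * mstep M 0 z y) = (\<Sum>z\<in>UNIV. if z = y then mstep M m x z else 0)"
    by (rule sum.cong) auto
  also have "\<dots> = mstep M m x y" by simp
  finally show ?case by simp
next
  case (Suc n)
  have "mstep M (m + Suc n) x y = (\<Sum>w\<in>UNIV. mstep M (m + n) x w * M w y)"
    by simp
  also have "\<dots> = (\<Sum>w\<in>UNIV. (\<Sum>z\<in>UNIV. mstep M m x z * mstep M n z w) * M w y)"
    using Suc.IH by presburger
  also have "\<dots> = (\<Sum>z\<in>UNIV. mstep M m x z * (\<Sum>w\<in>UNIV. mstep M n z w * M w y))"
    by (rule sum_swap3)
  also have "\<dots> = (\<Sum>z\<in>UNIV. mstep M m x z * mstep M (Suc n) z y)" by simp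
  finally show ?case .
qed

lemma mstep_one: "mstep M 1 x y = M x y"
proof -
  have "(\<lambda>z. mstep M 0 x z * M z y) = (\<lambda>z. if z = x then M x y else 0)" by auto
  then show ?thesis by (simp only: mstep.simps One_nat_def sum.delta' finite_UNIV) simp
qed

lemma mstep_ge: "stoch M \<Longrightarrow> mstep M (m + n) x y \<ge> mstep M m x z * mstep M n z y"
  unfolding mstep_add
  by (rule member_le_sum[where f="\<lambda>z. mstep M m x z * mstep M n z y"]) (auto intro: mult_nonneg_nonneg mstep_nonneg)

lemma app_add: "app (mstep M (m + n)) h x = app (mstep M m) (app (mstep M n) h) x"
  unfolding app_def mstep_add by (rule sum_swap3)

lemma app_le_max: "stoch K \<Longrightarrow> app K h x \<le> Max (range h)"
proof -
  assume K: "stoch K"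
  have "app K h x \<le> (\<Sum>y\<in>UNIV. K x y * Max (range h))"
    unfolding app_def using K by (intro sum_mono mult_left_mono) (auto simp: stoch_def)
  also have "\<dots> = Max (range h)" using K by (simp add: stoch_def sum_distrib_right[symmetric])
  finally show ?thesis .
qed

lemma app_ge_min: "stoch K \<Longrightarrow> app K h x \<ge> Min (range h)"
proof -
  assume K: "stoch K"
  have "app K h x \<ge> (\<Sum>y\<in>UNIV. K x y * Min (range h))"
    unfolding app_def using K by (intro sum_mono mult_left_mono) (auto simp: stoch_def)
  moreover have "(\<Sum>y\<in>UNIV. K x y * Min (range h)) = Min (range h)" using K by (simp add: stoch_def sum_distrib_right[symmetric])
  ultimately show ?thesis by simp
qed

lemma app_contr_up:
  assumes K: "stoch K" and d: "\<And>x y. K x y \<ge> \<delta>"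
  shows "app K h x \<le> Max (range h) - \<delta> * (Max (range h) - Min (range h))"
proof -
  define mx where "mx = Max (range h)"
  define mn where "mn = Min (range h)"
  have "mn \<in> range h" unfolding mn_def by (intro Min_in) auto
  then obtain y0 where y0: "mn = h y0" by blast
  have hle: "h y \<le> mx" for y unfolding mx_def by (intro Max_ge) auto
  have Kn: "K x y \<ge> 0" for y using K by (simp add: stoch_def)
  have "(\<Sum>y\<in>UNIV. K x y * (mx - h y)) = (\<Sum>y\<in>UNIV. K x y) * mx - app K h x"
    unfolding app_def by (simp add: right_diff_distrib sum_subtractf sum_distrib_right)
  then have s: "(\<Sum>y\<in>UNIV. K x y * (mx - h y)) = mx - app K h x"
    using K by (simp add: stoch_def)
  have "K x y0 * (mx - mn) \<le> (\<Sum>y\<in>UNIV. K x y * (mx - h y))"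
    unfolding y0 by (rule member_le_sum[where f="\<lambda>y. K x y * (mx - h y)"]) (use Kn hle in \<open>auto intro: mult_nonneg_nonneg\<close>)
  moreover have "\<delta> * (mx - mn) \<le> K x y0 * (mx - mn)"
    by (rule mult_right_mono[OF d]) (use hle y0 in simp)
  ultimately show ?thesis using s unfolding mx_def[symmetric] mn_def[symmetric] by linarith
qed

lemma app_contr_down:
  assumes K: "stoch K" and d: "\<And>x y. K x y \<ge> \<delta>"
  shows "app K h x \<ge> Min (range h) + \<delta> * (Max (range h) - Min (range h))"
proof -
  define mx where "mx = Max (range h)"
  define mn where "mn = Min (range h)"
  have "mx \<in> range h" unfolding mx_def by (intro Max_in) auto
  then obtain y0 where y0: "mx = h y0" by blast
  have hge: "mn \<le> h y" for y unfolding mn_def by (intro Min_le) auto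
  have Kn: "K x y \<ge> 0" for y using K by (simp add: stoch_def)
  have "(\<Sum>y\<in>UNIV. K x y * (h y - mn)) = app K h x - (\<Sum>y\<in>UNIV. K x y) * mn"
    unfolding app_def by (simp add: right_diff_distrib sum_subtractf sum_distrib_right)
  then have s: "(\<Sum>y\<in>UNIV. K x y * (h y - mn)) = app K h x - mn"
    using K by (simp add: stoch_def)
  have "K x y0 * (mx - mn) \<le> (\<Sum>y\<in>UNIV. K x y * (h y - mn))"
    unfolding y0 by (rule member_le_sum[where f="\<lambda>y. K x y * (h y - mn)"]) (use Kn hge in \<open>auto intro: mult_nonneg_nonneg\<close>)
  moreover have "\<delta> * (mx - mn) \<le> K x y0 * (mx - mn)"
    by (rule mult_right_mono[OF d]) (use hge y0 in simp)
  ultimately show ?thesis using s unfolding mx_def[symmetric] mn_def[symmetric] by linarith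
qed

lemma Max_range_le: "(\<And>x. f x \<le> (c::real)) \<Longrightarrow> Max (range (f :: 'x::finite \<Rightarrow> real)) \<le> c"
  by simp

lemma Min_range_ge: "(\<And>x. f x \<ge> (c::real)) \<Longrightarrow> Min (range (f :: 'x::finite \<Rightarrow> real)) \<ge> c"
  by simp

lemma le_Max_range: "(f :: 'x::finite \<Rightarrow> real) x \<le> Max (range f)"
  by simp

lemma Min_range_le: "Min (range (f :: 'x::finite \<Rightarrow> real)) \<le> f x"
  by simp

lemma primitive:
  assumes M: "stoch M" and irr: "irreducible M" and ap: "aperiodic M"
  shows "\<exists>N>0. \<forall>x y. mstep M N x y > 0"
proof -
  have ex: "\<exists>n0. \<forall>n\<ge>n0. n \<in> {n. n > 0 \<and> mstep M n x x > 0}" for x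
  proof (rule numsemigroup)
    fix a b assume "a \<in> {n. n > 0 \<and> mstep M n x x > 0}" "b \<in> {n. n > 0 \<and> mstep M n x x > 0}"
    then have "a + b > 0" "mstep M a x x * mstep M b x x > 0" by auto
    moreover have "mstep M (a + b) x x \<ge> mstep M a x x * mstep M b x x" by (rule mstep_ge[OF M])
    ultimately show "a + b \<in> {n. n > 0 \<and> mstep M n x x > 0}" by auto
  next
    show "Gcd {n. n > 0 \<and> mstep M n x x > 0} = 1" using ap by (simp add: aperiodic_def)
  qed
  obtain n0 where n0': "\<forall>x. \<forall>n\<ge>n0 x. n \<in> {n. n > 0 \<and> mstep M n x x > 0}"
    using choice[of "\<lambda>x n0. \<forall>n\<ge>n0. n \<in> {n. n > 0 \<and> mstep M n x x > 0}"] ex by blast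
  have n0: "\<And>x n. n \<ge> n0 x \<Longrightarrow> mstep M n x x > 0" using n0' by blast
  have "\<forall>p. \<exists>n. n > 0 \<and> mstep M n (fst p) (snd p) > 0" using irr unfolding irreducible_def by blast
  then obtain m' where m': "\<forall>p. m' p > 0 \<and> mstep M (m' p) (fst p) (snd p) > 0"
    using choice[of "\<lambda>p n. n > 0 \<and> mstep M n (fst p) (snd p) > 0"] by blast
  define m where "m x y = m' (x, y)" for x y
  have m: "\<And>x y. m x y > 0 \<and> mstep M (m x y) x y > 0" using m' unfolding m_def by (metis fst_conv snd_conv)
  define N where "N = Max (range (\<lambda>(x,y). n0 x + m x y)) + 1"
  have Nge: "N \<ge> n0 x + m x y + 1" for x y
  proof -
    have "(\<lambda>(x,y). n0 x + m x y) (x,y) \<le> Max (range (\<lambda>(x,y). n0 x + m x y))"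
      by (rule Max_ge) auto
    then show ?thesis by (simp add: N_def)
  qed
  show ?thesis
  proof (intro exI[of _ N] conjI allI)
    show "N > 0" by (simp add: N_def)
    fix x y
    have eq: "N = (N - m x y) + m x y" using Nge[of x y] by simp
    have "mstep M (N - m x y) x x > 0" using Nge[of x y] by (intro n0) simp
    then have "mstep M (N - m x y) x x * mstep M (m x y) x y > 0" using m by simp
    also have "\<dots> \<le> mstep M ((N - m x y) + m x y) x y" by (rule mstep_ge[OF M])
    finally have "0 < mstep M ((N - m x y) + m x y) x y" .
    then show "mstep M N x y > 0" by (simp only: eq[symmetric])
  qed
qed


lemma app_mstep0: "app (mstep M 0) h x = h x"
proof -
  have "(\<lambda>y. mstep M 0 x y * h y) = (\<lambda>y. if y = x then h x else 0)" by auto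
  then show ?thesis unfolding app_def by (simp only: sum.delta' finite_UNIV) simp
qed

lemma conv:
  assumes M: "stoch M" and N: "N > 0" and dpos: "\<delta> > 0" and dle: "\<And>x y. mstep M N x y \<ge> \<delta>"
  shows "\<exists>L. \<forall>t x. \<bar>app (mstep M t) h x - L\<bar> \<le> (Max (range h) - Min (range h)) * (1 - \<delta>/2)^(t div N)"
proof -
  define v where "v t = app (mstep M t) h" for t
  define mx where "mx t = Max (range (v t))" for t
  define mn where "mn t = Min (range (v t))" for t
  define \<rho> where "\<rho> = 1 - \<delta>/2"
  have vadd: "v (s + t) x = app (mstep M s) (v t) x" for s t x
    unfolding v_def by (rule app_add)
  have vle: "v t x \<le> mx t" for t x unfolding mx_def by (rule le_Max_range)
  have vge: "mn t \<le> v t x" for t x unfolding mn_def by (rule Min_range_le)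
  have mxmono: "mx (s + t) \<le> mx t" for s t
    unfolding mx_def[of "s+t"] by (rule Max_range_le) (simp add: vadd app_le_max[OF stoch_mstep[OF M]] mx_def)
  have mnmono: "mn (s + t) \<ge> mn t" for s t
    unfolding mn_def[of "s+t"] by (rule Min_range_ge) (simp add: vadd app_ge_min[OF stoch_mstep[OF M]] mn_def)
  have mnmx: "mn t \<le> mx t" for t using vle[of t undefined] vge[of t undefined] by simp
  have contr: "mx (N + t) - mn (N + t) \<le> \<rho> * (mx t - mn t)" for t
  proof -
    have "mx (N + t) \<le> mx t - \<delta> * (mx t - mn t)"
      unfolding mx_def[of "N+t"] by (rule Max_range_le)
        (simp add: vadd mx_def mn_def app_contr_up[OF stoch_mstep[OF M] dle])
    moreover have "mn (N + t) \<ge> mn t + \<delta> * (mx t - mn t)"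
      unfolding mn_def[of "N+t"] by (rule Min_range_ge)
        (simp add: vadd mx_def mn_def app_contr_down[OF stoch_mstep[OF M] dle])
    ultimately have "mx (N + t) - mn (N + t) \<le> (1 - 2*\<delta>) * (mx t - mn t)"
      by (simp add: algebra_simps)
    also have "\<dots> \<le> \<rho> * (mx t - mn t)" using mnmx[of t] dpos
      unfolding \<rho>_def by (intro mult_right_mono) auto
    finally show ?thesis .
  qed
  have rho0: "\<rho> \<ge> 0"
  proof -
    have "mstep M N undefined undefined \<le> 1" by (rule mstep_le1[OF M])
    then show ?thesis using dle[of undefined undefined] by (simp add: \<rho>_def)
  qed
  have kN: "mx (k * N) - mn (k * N) \<le> \<rho> ^ k * (mx 0 - mn 0)" for k
  proof (induction k)
    case 0 then show ?case by simp
  next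
    case (Suc k)
    have "mx (Suc k * N) - mn (Suc k * N) \<le> \<rho> * (mx (k * N) - mn (k * N))"
      using contr[of "k * N"] by (simp add: add.commute[of N])
    also have "\<dots> \<le> \<rho> * (\<rho> ^ k * (mx 0 - mn 0))" using Suc rho0 by (intro mult_left_mono) auto
    finally show ?case by simp
  qed
  have osc: "mx t - mn t \<le> \<rho> ^ (t div N) * (mx 0 - mn 0)" for t
  proof -
    have t: "t = (t - (t div N) * N) + (t div N) * N"
      by (metis add.commute div_mult_mod_eq add_diff_cancel_right')
    have "mx t \<le> mx ((t div N) * N)"
      using mxmono[of "t - (t div N) * N" "(t div N) * N"] by (simp only: t[symmetric])
    moreover have "mn t \<ge> mn ((t div N) * N)"
      using mnmono[of "(t div N) * N" "t - (t div N) * N"] by (simp only: t[symmetric])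
    ultimately show ?thesis using kN[of "t div N"] by linarith
  qed
  have dec: "decseq mx" unfolding decseq_Suc_iff
  proof
    fix n show "mx (Suc n) \<le> mx n" using mxmono[where s=1 and t=n] by simp
  qed
  have bnd: "\<forall>i. mn 0 \<le> mx i"
  proof
    fix i
    have "mn 0 \<le> mn (i + 0)" by (rule mnmono)
    then show "mn 0 \<le> mx i" using mnmx[of i] by simp
  qed
  obtain L where L: "mx \<longlonglongrightarrow> L" "\<forall>i. L \<le> mx i" using decseq_convergent[OF dec bnd] by blast
  have Lge: "mn t \<le> L" for t
  proof (rule LIMSEQ_le_const[OF L(1)], intro exI[of _ t] allI impI)
    fix n assume "t \<le> n"
    then have "mn t \<le> mn n" using mnmono[where s="n - t" and t=t] by simp
    then show "mn t \<le> mx n" using mnmx[of n] by simp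
  qed
  have h0: "v 0 = h" unfolding v_def by (rule ext) (rule app_mstep0)
  show ?thesis
  proof (intro exI[of _ L] allI)
    fix t x
    have "\<bar>v t x - L\<bar> \<le> mx t - mn t" using vle[of t x] vge[of t x] spec[OF L(2), of t] Lge[of t] by (simp add: abs_le_iff)
    also have "\<dots> \<le> \<rho> ^ (t div N) * (mx 0 - mn 0)" by (rule osc)
    finally show "\<bar>app (mstep M t) h x - L\<bar> \<le> (Max (range h) - Min (range h)) * (1 - \<delta>/2)^(t div N)"
      by (simp add: v_def[symmetric] mx_def mn_def h0 \<rho>_def mult.commute)
  qed
qed


lemma geo_tend:
  fixes a :: "nat \<Rightarrow> real"
  assumes b: "\<And>t. \<bar>a t - L\<bar> \<le> C * r ^ t" and r: "0 \<le> r" "r < 1"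
  shows "a \<longlonglongrightarrow> L"
proof -
  have g: "(\<lambda>t. C * r ^ t) \<longlonglongrightarrow> 0"
    using r by (intro tendsto_mult_right_zero LIMSEQ_power_zero) auto
  have "(\<lambda>t. a t - L) \<longlonglongrightarrow> 0"
    by (rule Lim_null_comparison[OF _ g]) (use b in auto)
  from tendsto_add[OF this tendsto_const[of L]] show ?thesis by simp
qed

lemma app_ind: "app K (\<lambda>z. if z = y then 1 else 0) x = K x y"
proof -
  have "(\<lambda>z. K x z * (if z = y then 1 else 0)) = (\<lambda>z. if z = y then K x y else 0)" by auto
  then show ?thesis unfolding app_def by (simp only: sum.delta' finite_UNIV) simp
qed

lemma geo_bound:
  assumes M: "stoch M" and irr: "irreducible M" and ap: "aperiodic M"
  shows "\<exists>r. 0 \<le> r \<and> r < 1 \<and> (\<forall>h. \<exists>L C. \<forall>t x. \<bar>app (mstep M t) h x - L\<bar> \<le> C * r ^ t)"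
proof -
  obtain N where N: "N > 0" "\<And>x y. mstep M N x y > 0" using primitive[OF M irr ap] by blast
  define \<delta> where "\<delta> = Min (range (\<lambda>(x,y). mstep M N x y))"
  have dle: "\<delta> \<le> mstep M N x y" for x y
    unfolding \<delta>_def using Min_range_le[of "\<lambda>(x,y). mstep M N x y" "(x,y)"] by simp
  have dpos: "\<delta> > 0" unfolding \<delta>_def using N(2) by (subst Min_gr_iff) auto
  have d1: "\<delta> \<le> 1"
  proof -
    have "mstep M N undefined undefined \<le> 1" by (rule mstep_le1[OF M])
    then show ?thesis using dle[of undefined undefined] by simp
  qed
  define \<rho> where "\<rho> = 1 - \<delta>/2"
  have rho: "0 < \<rho>" "\<rho> < 1" using dpos d1 by (auto simp: \<rho>_def)
  define r where "r = root N \<rho>"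
  have r: "0 < r" "r < 1" using rho N(1) by (auto simp: r_def real_root_lt_1_iff)
  have rN: "r ^ N = \<rho>" using rho N(1) by (simp add: r_def real_root_pow_pos2)
  have rb: "\<rho> ^ (t div N) \<le> r ^ t / r ^ N" for t
  proof -
    have "r ^ t = r ^ (N * (t div N) + t mod N)" by simp
    also have "\<dots> = (r ^ N) ^ (t div N) * r ^ (t mod N)" by (simp only: power_add power_mult)
    also have "\<dots> = \<rho> ^ (t div N) * r ^ (t mod N)" by (simp only: rN)
    finally have eq: "r ^ t = \<rho> ^ (t div N) * r ^ (t mod N)" .
    have "r ^ N \<le> r ^ (t mod N)" using r N(1) by (intro power_decreasing) auto
    then have "\<rho> ^ (t div N) * r ^ N \<le> r ^ t" unfolding eq using rho by (intro mult_left_mono) auto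
    then show ?thesis using r by (simp add: field_simps)
  qed
  have main: "\<exists>L C. \<forall>t x. \<bar>app (mstep M t) h x - L\<bar> \<le> C * r ^ t" for h
  proof -
    obtain L where L: "\<And>t x. \<bar>app (mstep M t) h x - L\<bar> \<le> (Max (range h) - Min (range h)) * (1 - \<delta>/2)^(t div N)"
      using conv[OF M N(1) dpos dle, of h] by blast
    have osc: "Max (range h) - Min (range h) \<ge> 0" using le_Max_range[of h undefined] Min_range_le[of h undefined] by simp
    have "\<forall>t x. \<bar>app (mstep M t) h x - L\<bar> \<le> (Max (range h) - Min (range h)) / r ^ N * r ^ t"
    proof (intro allI)
      fix t x
      have "\<bar>app (mstep M t) h x - L\<bar> \<le> (Max (range h) - Min (range h)) * (r ^ t / r ^ N)"
        using L[of t x] mult_left_mono[OF rb[of t] osc] by (simp add: \<rho>_def)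
      then show "\<bar>app (mstep M t) h x - L\<bar> \<le> (Max (range h) - Min (range h)) / r ^ N * r ^ t" by simp
    qed
    then show "\<exists>L C. \<forall>t x. \<bar>app (mstep M t) h x - L\<bar> \<le> C * r ^ t" by blast
  qed
  show ?thesis using r main by (intro exI[of _ r]) auto
qed


definition isstat :: "('x::finite \<Rightarrow> 'x \<Rightarrow> real) \<Rightarrow> ('x \<Rightarrow> real) \<Rightarrow> bool" where
  "isstat M d \<longleftrightarrow> (\<forall>x. d x \<ge> 0) \<and> (\<Sum>x\<in>UNIV. d x) = 1 \<and> (\<forall>y. d y = (\<Sum>x\<in>UNIV. d x * M x y))"

lemma ergodic:
  assumes M: "stoch M" and irr: "irreducible M" and ap: "aperiodic M"
  shows "\<exists>d r. 0 \<le> r \<and> r < 1 \<and> isstat M d \<and> (\<forall>d'. isstat M d' \<longrightarrow> d' = d)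
     \<and> (\<forall>h. \<exists>C. \<forall>t x. \<bar>app (mstep M t) h x - (\<Sum>y\<in>UNIV. d y * h y)\<bar> \<le> C * r ^ t)"
proof -
  obtain r where r: "0 \<le> r" "r < 1" and gb: "\<And>h. \<exists>L C. \<forall>t x. \<bar>app (mstep M t) h x - L\<bar> \<le> C * r ^ t"
    using geo_bound[OF M irr ap] by blast
  have ex1: "\<exists>L C. \<forall>t x. \<bar>mstep M t x y - L\<bar> \<le> C * r ^ t" for y
    using gb[of "\<lambda>z. if z = y then 1 else 0"] by (simp only: app_ind)
  have "\<forall>y. \<exists>p. \<forall>t x. \<bar>mstep M t x y - fst p\<bar> \<le> snd p * r ^ t"
  proof
    fix y
    obtain L C where "\<forall>t x. \<bar>mstep M t x y - L\<bar> \<le> C * r ^ t" using ex1[of y] by blast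
    then show "\<exists>p. \<forall>t x. \<bar>mstep M t x y - fst p\<bar> \<le> snd p * r ^ t" by (intro exI[of _ "(L, C)"]) simp
  qed
  then obtain f where f: "\<forall>y. \<forall>t x. \<bar>mstep M t x y - fst (f y)\<bar> \<le> snd (f y) * r ^ t"
    using choice[of "\<lambda>y p. \<forall>t x. \<bar>mstep M t x y - fst p\<bar> \<le> snd p * r ^ t"] by blast
  define d where "d y = fst (f y)" for y
  define C where "C y = snd (f y)" for y
  have dC: "\<And>y t x. \<bar>mstep M t x y - d y\<bar> \<le> C y * r ^ t" using f unfolding d_def C_def by blast
  have md: "(\<lambda>t. mstep M t x y) \<longlonglongrightarrow> d y" for x y by (rule geo_tend[OF dC r])
  have appd: "(\<lambda>t. app (mstep M t) h x) \<longlonglongrightarrow> (\<Sum>y\<in>UNIV. d y * h y)" for h x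
    unfolding app_def by (intro tendsto_sum tendsto_mult_right md)
  have bound: "\<exists>C. \<forall>t x. \<bar>app (mstep M t) h x - (\<Sum>y\<in>UNIV. d y * h y)\<bar> \<le> C * r ^ t" for h
  proof -
    obtain L C where LC: "\<And>t x. \<bar>app (mstep M t) h x - L\<bar> \<le> C * r ^ t" using gb[of h] by blast
    have "L = (\<Sum>y\<in>UNIV. d y * h y)"
      using LIMSEQ_unique[OF geo_tend[OF LC r] appd] .
    then show ?thesis using LC by blast
  qed
  have dnn: "d y \<ge> 0" for y
    by (rule LIMSEQ_le_const[OF md[of undefined y]]) (auto intro: mstep_nonneg[OF M])
  have dsum: "(\<Sum>y\<in>UNIV. d y) = 1"
  proof -
    have "(\<lambda>t. \<Sum>y\<in>UNIV. mstep M t undefined y) \<longlonglongrightarrow> (\<Sum>y\<in>UNIV. d y)"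
      by (intro tendsto_sum md)
    then have "(\<lambda>t. 1::real) \<longlonglongrightarrow> (\<Sum>y\<in>UNIV. d y)" by (simp add: mstep_sum[OF M])
    from LIMSEQ_unique[OF tendsto_const this] show ?thesis by simp
  qed
  have dst: "d y = (\<Sum>x\<in>UNIV. d x * M x y)" for y
  proof -
    have "(\<lambda>t. mstep M (Suc t) undefined y) \<longlonglongrightarrow> d y" using md LIMSEQ_Suc by blast
    moreover have "(\<lambda>t. mstep M (Suc t) undefined y) \<longlonglongrightarrow> (\<Sum>x\<in>UNIV. d x * M x y)"
      unfolding mstep.simps by (intro tendsto_sum tendsto_mult_right md)
    ultimately show ?thesis by (rule LIMSEQ_unique)
  qed
  have uniq: "d' = d" if d': "isstat M d'" for d'
  proof
    fix y
    have it: "d' y = (\<Sum>x\<in>UNIV. d' x * mstep M t x y)" for t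
    proof (induction t arbitrary: y)
      case 0
      have "(\<lambda>x. d' x * mstep M 0 x y) = (\<lambda>x. if x = y then d' y else 0)" by auto
      then show ?case by (simp only: sum.delta' finite_UNIV) simp
    next
      case (Suc t)
      have "(\<Sum>x\<in>UNIV. d' x * mstep M (Suc t) x y) = (\<Sum>z\<in>UNIV. (\<Sum>x\<in>UNIV. d' x * mstep M t x z) * M z y)"
        unfolding mstep.simps by (rule sum_swap3[symmetric])
      also have "\<dots> = (\<Sum>z\<in>UNIV. d' z * M z y)" by (simp only: Suc.IH[symmetric])
      also have "\<dots> = d' y" using d' unfolding isstat_def by (metis (no_types))
      finally show ?case by simp
    qed
    have "(\<lambda>t. \<Sum>x\<in>UNIV. d' x * mstep M t x y) \<longlonglongrightarrow> (\<Sum>x\<in>UNIV. d' x * d y)"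
      by (intro tendsto_sum tendsto_mult_left md)
    moreover have "(\<lambda>t. \<Sum>x\<in>UNIV. d' x * mstep M t x y) = (\<lambda>t. d' y)"
      by (rule ext) (rule it[symmetric])
    moreover have "(\<Sum>x\<in>UNIV. d' x * d y) = d y"
    proof -
      have "(\<Sum>x\<in>UNIV. d' x * d y) = (\<Sum>x\<in>UNIV. d' x) * d y" by (rule sum_distrib_right[symmetric])
      also have "(\<Sum>x\<in>UNIV. d' x) = 1" using d' unfolding isstat_def by blast
      finally show ?thesis by simp
    qed
    ultimately have "(\<lambda>t. d' y) \<longlonglongrightarrow> d y" by simp
    from LIMSEQ_unique[OF tendsto_const this] show "d' y = d y" .
  qed
  show ?thesis
    using r dnn dsum dst uniq bound unfolding isstat_def by blast
qed


lemma sum_pair: "(\<Sum>y\<in>(UNIV::('s::finite \<times> 'a::finite) set). f y) = (\<Sum>s\<in>UNIV. \<Sum>a\<in>UNIV. f (s, a))"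
proof -
  have "(\<Sum>s\<in>UNIV. \<Sum>a\<in>UNIV. f (s, a)) = (\<Sum>(s,a)\<in>UNIV \<times> UNIV. f (s, a))"
    by (rule sum.cartesian_product)
  then show ?thesis by simp
qed

lemma stoch_sa: "kernel P \<Longrightarrow> policy pol \<Longrightarrow> stoch (sa_trans P pol)"
  unfolding stoch_def
proof (intro conjI allI)
  fix x y assume "kernel P" "policy pol"
  then show "sa_trans P pol x y \<ge> 0" by (simp add: sa_trans_def kernel_def policy_def)
next
  fix x :: "'a \<times> 'b" assume k: "kernel P" and p: "policy pol"
  have "(\<Sum>y\<in>UNIV. sa_trans P pol x y) = (\<Sum>s\<in>UNIV. P (fst x) (snd x) s * (\<Sum>a\<in>UNIV. pol s a))"
    by (simp add: sum_pair sa_trans_def sum_distrib_left)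
  also have "\<dots> = 1" using k p by (simp add: kernel_def policy_def)
  finally show "(\<Sum>y\<in>UNIV. sa_trans P pol x y) = 1" .
qed

lemma stat_dist_eq:
  assumes "isstat (sa_trans P pol) d" "\<And>d'. isstat (sa_trans P pol) d' \<Longrightarrow> d' = d"
  shows "stat_dist P pol = d"
  unfolding stat_dist_def using assms unfolding isstat_def by (intro the_equality) blast+

lemma bellman_term:
  assumes k: "kernel Phat" and p: "policy pol" and st: "standing Phat pol"
    and mu: "isstat Mb mu"
  shows "\<bar>expect mu (diff_Q Phat pol g) -
      (\<Sum>x\<in>UNIV. mu x * (\<Sum>s'\<in>UNIV. Phat (fst x) (snd x) s' * (\<Sum>a'\<in>UNIV. pol s' a' * diff_Q Phat pol g (s', a'))))\<bar>
     = \<bar>expect mu g - expect (stat_dist Phat pol) g\<bar>"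
proof -
  define M where "M = sa_trans Phat pol"
  have M: "stoch M" unfolding M_def by (rule stoch_sa[OF k p])
  obtain d r where r: "0 \<le> r" "r < 1" and ds: "isstat M d" and du: "\<And>d'. isstat M d' \<Longrightarrow> d' = d"
    and bd: "\<And>h. \<exists>C. \<forall>t x. \<bar>app (mstep M t) h x - (\<Sum>y\<in>UNIV. d y * h y)\<bar> \<le> C * r ^ t"
    using ergodic[OF M] st unfolding standing_def M_def by blast
  have nu: "stat_dist Phat pol = d" using stat_dist_eq ds du unfolding M_def by blast
  define \<eta> where "\<eta> = expect (stat_dist Phat pol) g"
  have eta: "\<eta> = (\<Sum>y\<in>UNIV. d y * g y)" by (simp add: \<eta>_def nu expect_def)
  define a where "a t x = app (mstep M t) g x - \<eta>" for t x
  obtain C where C: "\<And>t x. \<bar>a t x\<bar> \<le> C * r ^ t" using bd[of g] unfolding a_def eta by blast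
  have sa: "summable (\<lambda>t. a t x)" for x
    by (rule summable_comparison_test[of _ "\<lambda>t. C * r ^ t"])
      (use C r in \<open>auto intro!: summable_mult summable_geometric\<close>)
  define f where "f = diff_Q Phat pol g"
  have fa: "f x = (\<Sum>t. a t x)" for x
    by (simp add: f_def diff_Q_def a_def app_def \<eta>_def avg_reward_def M_def)
  have step: "(\<Sum>y\<in>UNIV. M x y * a t y) = a (Suc t) x" for x t
  proof -
    have e1: "app (mstep M 1) (app (mstep M t) g) x = (\<Sum>y\<in>UNIV. M x y * app (mstep M t) g y)"
      by (simp only: app_def[of "mstep M 1"] mstep_one)
    have rs: "(\<Sum>y\<in>UNIV. M x y) = 1" using M unfolding stoch_def by blast
    have "(\<Sum>y\<in>UNIV. M x y * a t y) = (\<Sum>y\<in>UNIV. M x y * app (mstep M t) g y) - (\<Sum>y\<in>UNIV. M x y) * \<eta>"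
      by (simp add: a_def right_diff_distrib sum_subtractf sum_distrib_right)
    also have "\<dots> = app (mstep M (1 + t)) g x - \<eta>" by (simp only: rs e1[symmetric] app_add mult_1)
    also have "\<dots> = a (Suc t) x" by (simp add: a_def)
    finally show ?thesis .
  qed
  have bell: "(\<Sum>y\<in>UNIV. M x y * f y) = f x - (g x - \<eta>)" for x
  proof -
    have "(\<Sum>y\<in>UNIV. M x y * f y) = (\<Sum>y\<in>UNIV. \<Sum>t. M x y * a t y)"
      by (simp add: fa suminf_mult sa)
    also have "\<dots> = (\<Sum>t. \<Sum>y\<in>UNIV. M x y * a t y)"
      by (rule suminf_sum[symmetric]) (simp add: summable_mult sa)
    also have "\<dots> = (\<Sum>t. a (Suc t) x)" by (simp add: step)
    also have "\<dots> = f x - a 0 x" unfolding fa by (rule suminf_split_head[OF sa])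
    also have "a 0 x = g x - \<eta>" by (simp add: a_def app_mstep0)
    finally show ?thesis .
  qed
  have inner: "(\<Sum>s'\<in>UNIV. Phat (fst x) (snd x) s' * (\<Sum>a'\<in>UNIV. pol s' a' * f (s', a'))) = (\<Sum>y\<in>UNIV. M x y * f y)" for x
    by (simp add: sum_pair M_def sa_trans_def sum_distrib_left mult.assoc)
  have "expect mu f - (\<Sum>x\<in>UNIV. mu x * (\<Sum>s'\<in>UNIV. Phat (fst x) (snd x) s' * (\<Sum>a'\<in>UNIV. pol s' a' * f (s', a'))))
      = (\<Sum>x\<in>UNIV. mu x * (g x - \<eta>))"
  proof -
    have "(\<Sum>x\<in>UNIV. mu x * (\<Sum>s'\<in>UNIV. Phat (fst x) (snd x) s' * (\<Sum>a'\<in>UNIV. pol s' a' * f (s', a'))))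
        = (\<Sum>x\<in>UNIV. mu x * (f x - (g x - \<eta>)))" by (simp only: inner bell)
    moreover have "expect mu f - (\<Sum>x\<in>UNIV. mu x * (f x - (g x - \<eta>)))
        = (\<Sum>x\<in>UNIV. mu x * f x - mu x * (f x - (g x - \<eta>)))"
      unfolding expect_def by (rule sum_subtractf[symmetric])
    moreover have "\<dots> = (\<Sum>x\<in>UNIV. mu x * (g x - \<eta>))"
      by (rule sum.cong) (simp_all add: algebra_simps)
    ultimately show ?thesis by simp
  qed
  also have "\<dots> = expect mu g - (\<Sum>x\<in>UNIV. mu x) * \<eta>"
    by (simp add: expect_def right_diff_distrib sum_subtractf sum_distrib_right)
  also have "(\<Sum>x\<in>UNIV. mu x) = 1" using mu unfolding isstat_def by blast
  finally show ?thesis by (simp add: f_def \<eta>_def)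
qed

theorem theorem3p1:
  fixes Pstar Phat :: "'s::finite \<Rightarrow> 'a::finite \<Rightarrow> 's \<Rightarrow> real"
    and polb pol :: "'s \<Rightarrow> 'a \<Rightarrow> real"
    and G :: "('s \<times> 'a \<Rightarrow> real) set"
  assumes "kernel Pstar" and "kernel Phat"
    and "policy polb" and "policy pol"
    and "standing Pstar polb" and "standing Phat pol"
    and "\<exists>B. \<forall>g\<in>G. \<forall>x. \<bar>g x\<bar> \<le> B"
  shows "IPM G (stat_dist Pstar polb) (stat_dist Phat pol)
       = bellman_R ((\<lambda>g. diff_Q Phat pol g) ` G) (stat_dist Pstar polb) pol Phat"
proof -
  define Mb where "Mb = sa_trans Pstar polb"
  have Mb: "stoch Mb" unfolding Mb_def by (rule stoch_sa) fact+
  obtain d where ds: "isstat Mb d" and du: "\<And>d'. isstat Mb d' \<Longrightarrow> d' = d"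
    using ergodic[OF Mb] assms(5) unfolding standing_def Mb_def by blast
  have mu: "isstat Mb (stat_dist Pstar polb)"
  proof -
    have "stat_dist Pstar polb = d" by (rule stat_dist_eq) (use ds du in \<open>unfold Mb_def\<close>)
    then show ?thesis using ds by (simp only:)
  qed
  show ?thesis
    unfolding IPM_def bellman_R_def image_image
    by (rule SUP_cong[OF refl], rule bellman_term[OF assms(2,4,6) mu, symmetric])
qed

end
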